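(* Let $\mathbb{G}$ be a topological map embedded in a closed orientable surface of genus $g\ge0$ and let $\ell$ be a tame loop of $\mathbb{G}$. Let $\mathfrak{m}_\ell$ be the real vector space spanned by the Makeenko--Migdal vectors $\mu_v$, $v\in V_\ell$, and the 2-forms $d\omega_e$, $e\notin E_\ell$. Then $$\mathfrak{m}_\ell=\begin{cases}\{\alpha\in\Omega^2(\mathbb{G},\mathbb{R}):\langle\alpha,\mu_*\rangle=0\} & \text{if }[\ell]_\mathbb{R}\neq0,\\ \{\alpha\in\Omega^2(\mathbb{G},\mathbb{R}):\langle\alpha,\mu_*\rangle=\langle\alpha,n_\ell\rangle=0\} & \text{if }[\ell]_\mathbb{R}=0.\end{cases}$$
   Context: A map $\mathbb{G}=(V,E,F)$ is a graph embedded in the surface with all faces homeomorphic to discs; every edge $e$ comes with its reverse $e^{-1}$, and $E_+$ (resp. $F_+$) is a choice of one orientation per edge (resp. the positively oriented faces). $\Omega^0,\Omega^1,\Omega^2$ are the real-valued functions on $V$, on $E$ with $\omega(e^{-1})=-\omega(e)$, and on $F$ with $\mu(f^{-1})=-\mu(f)$; they carry the inner products making $(f_v)_{v\in V}$, $(\omega_e)_{e\in E_+}$, $(\mu_f)_{f\in F_+}$ orthonormal, where $f_v,\omega_e,\mu_f$ are the indicator forms ($\omega_{e^{-1}}=-\omega_e$). $d\omega(f)=\sum_{e\in\partial f}\omega(e)$ (sum over the edges of the boundary loop of $f$), $df(e)=f(\overline e)-f(\underline e)$, and $d^*$ is the adjoint of $d$. $\mu_*$ is the 2-form equal to $1$ on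 every $f\in F_+$. For a path $\ell=e_1\cdots e_n$, $\omega_\ell=\sum_i\omega_{e_i}$. The homology class $[\ell]_\mathbb{R}$ is the class of $\omega_\ell$ in $\ker(d^*:\Omega^1\to\Omega^0)/d^*(\Omega^2)$. If $[\ell]_\mathbb{R}=0$, the winding function $n_\ell\in\Omega^2$ is the unique 2-form with $d^*n_\ell=\omega_\ell$ and $\langle n_\ell,\mu_*\rangle=0$. A tame loop uses each unoriented edge at most once and each vertex at most twice, and at each vertex $v$ visited twice, labelling the four outgoing edges at $v$ used by $\ell$ (up to orientation) as $e_1,e_2,e_3,e_4$ in counterclockwise cyclic order, $\ell$ is cyclically equivalent to a loop of the form $\alpha e_1^{-1}e_3\beta e_2^{-1}e_4\gamma$; $V_\ell$ is the set of such vertices, and the Makeenko--Migdal vector at $v$ is $\mu_v=d\omega_{e_1}+d\omega_{e_3}=-d\omega_{e_2}-d\omega_{e_4}$. $E_\ell$ is the set of edges $e$ such that $\ell$ runs through $e$ or $e^{-1}$. *)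

theory Defs
  imports Complex_Main
begin

text \<open>
Combinatorial encoding of a map on a closed orientable surface (rotation system).
  D   : finite set of darts = oriented edges E;
  rv  : the reversal e \<mapsto> e^{-1} (fixed-point-free involution of D);
  sg  : the rotation: sg e is the next outgoing dart counterclockwise around the
        source vertex of e.
Vertices are the sg-orbits (the orbit of e is the source vertex of e), positively
oriented faces are the orbits of the face permutation (equivalently of rv o sg,
whose inverse sg^{-1} o rv follows the boundary of the face on the left of a dart).
Every connected rotation system defines a map on a closed orientable surface, of
genus g given by Euler's formula, and conversely.\<close>

definition vert :: "('d \<Rightarrow> 'd) \<Rightarrow> 'd \<Rightarrow> 'd set" where
  "vert sg e = {(sg ^^ k) e | k. True}"

definition faces :: "'d set \<Rightarrow> ('d \<Rightarrow> 'd) \<Rightarrow> ('d \<Rightarrow> 'd) \<Rightarrow> 'd set set" where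
  "faces D rv sg = (\<lambda>e. {((rv \<circ> sg) ^^ k) e | k. True}) ` D"

definition comb_map :: "'d set \<Rightarrow> ('d \<Rightarrow> 'd) \<Rightarrow> ('d \<Rightarrow> 'd) \<Rightarrow> bool" where
  "comb_map D rv sg \<longleftrightarrow>
     finite D \<and> D \<noteq> {} \<and>
     (\<forall>e\<in>D. rv e \<in> D \<and> rv (rv e) = e \<and> rv e \<noteq> e) \<and>
     bij_betw sg D D \<and>
     (\<forall>x\<in>D. \<forall>y\<in>D. (x, y) \<in> ({(e, sg e) | e. e \<in> D} \<union> {(e, rv e) | e. e \<in> D})\<^sup>*)"

definition Omega1 :: "'d set \<Rightarrow> ('d \<Rightarrow> 'd) \<Rightarrow> ('d \<Rightarrow> real) set" where
  "Omega1 D rv = {w. (\<forall>e\<in>D. w (rv e) = - w e) \<and> (\<forall>e. e \<notin> D \<longrightarrow> w e = 0)}"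

definition Omega2 :: "'d set \<Rightarrow> ('d \<Rightarrow> 'd) \<Rightarrow> ('d \<Rightarrow> 'd) \<Rightarrow> ('d set \<Rightarrow> real) set" where
  "Omega2 D rv sg = {a. \<forall>f. f \<notin> faces D rv sg \<longrightarrow> a f = 0}"

text \<open>Inner product on 1-forms making (omega_e), e in E_+, orthonormal:
  sum over one orientation of each edge = half the sum over all darts.\<close>
definition inner1 :: "'d set \<Rightarrow> ('d \<Rightarrow> real) \<Rightarrow> ('d \<Rightarrow> real) \<Rightarrow> real" where
  "inner1 D w w' = (\<Sum>e\<in>D. w e * w' e) / 2"

definition inner2 :: "'d set \<Rightarrow> ('d \<Rightarrow> 'd) \<Rightarrow> ('d \<Rightarrow> 'd) \<Rightarrow> ('d set \<Rightarrow> real) \<Rightarrow> ('d set \<Rightarrow> real) \<Rightarrow> real" where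
  "inner2 D rv sg a b = (\<Sum>f\<in>faces D rv sg. a f * b f)"

definition dform1 :: "'d set \<Rightarrow> ('d \<Rightarrow> 'd) \<Rightarrow> ('d \<Rightarrow> 'd) \<Rightarrow> ('d \<Rightarrow> real) \<Rightarrow> 'd set \<Rightarrow> real" where
  "dform1 D rv sg w = (\<lambda>f. if f \<in> faces D rv sg then (\<Sum>e\<in>f. w e) else 0)"

definition codiff2 :: "'d set \<Rightarrow> ('d \<Rightarrow> 'd) \<Rightarrow> ('d \<Rightarrow> 'd) \<Rightarrow> ('d set \<Rightarrow> real) \<Rightarrow> 'd \<Rightarrow> real" where
  "codiff2 D rv sg a = (THE w'. w' \<in> Omega1 D rv \<and>
      (\<forall>w\<in>Omega1 D rv. inner2 D rv sg (dform1 D rv sg w) a = inner1 D w w'))"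

definition ind1 :: "('d \<Rightarrow> 'd) \<Rightarrow> 'd \<Rightarrow> 'd \<Rightarrow> real" where
  "ind1 rv e = (\<lambda>x. if x = e then 1 else if x = rv e then -1 else 0)"

definition mu_star :: "'d set \<Rightarrow> ('d \<Rightarrow> 'd) \<Rightarrow> ('d \<Rightarrow> 'd) \<Rightarrow> 'd set \<Rightarrow> real" where
  "mu_star D rv sg = (\<lambda>f. if f \<in> faces D rv sg then 1 else 0)"

definition is_loop :: "'d set \<Rightarrow> ('d \<Rightarrow> 'd) \<Rightarrow> ('d \<Rightarrow> 'd) \<Rightarrow> 'd list \<Rightarrow> bool" where
  "is_loop D rv sg l \<longleftrightarrow> l \<noteq> [] \<and> set l \<subseteq> D \<and>
     (\<forall>i < length l. vert sg (rv (l ! i)) = vert sg (l ! ((i + 1) mod length l)))"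

definition omega_path :: "('d \<Rightarrow> 'd) \<Rightarrow> 'd list \<Rightarrow> 'd \<Rightarrow> real" where
  "omega_path rv l = (\<lambda>x. \<Sum>i<length l. ind1 rv (l ! i) x)"

definition visits :: "('d \<Rightarrow> 'd) \<Rightarrow> 'd list \<Rightarrow> 'd set \<Rightarrow> nat" where
  "visits sg l v = card {i. i < length l \<and> vert sg (l ! i) = v}"

definition ccw4 :: "('d \<Rightarrow> 'd) \<Rightarrow> 'd \<Rightarrow> 'd \<Rightarrow> 'd \<Rightarrow> 'd \<Rightarrow> bool" where
  "ccw4 sg a b c d \<longleftrightarrow> (\<exists>i j k. 0 < i \<and> i < j \<and> j < k \<and> k < card (vert sg a) \<and>
       (sg ^^ i) a = b \<and> (sg ^^ j) a = c \<and> (sg ^^ k) a = d)"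

text \<open>e1,e2,e3,e4 are outgoing darts at v in counterclockwise cyclic order and l is
cyclically equivalent to alpha e1^{-1} e3 beta e2^{-1} e4 gamma.\<close>
definition crossing_labels :: "('d \<Rightarrow> 'd) \<Rightarrow> ('d \<Rightarrow> 'd) \<Rightarrow> 'd list \<Rightarrow> 'd set \<Rightarrow>
     'd \<Rightarrow> 'd \<Rightarrow> 'd \<Rightarrow> 'd \<Rightarrow> bool" where
  "crossing_labels rv sg l v e1 e2 e3 e4 \<longleftrightarrow>
     vert sg e1 = v \<and> ccw4 sg e1 e2 e3 e4 \<and>
     (\<exists>i < length l. \<exists>j < length l.
        l ! i = rv e1 \<and> l ! ((i + 1) mod length l) = e3 \<and>
        l ! j = rv e2 \<and> l ! ((j + 1) mod length l) = e4)"

definition tame_loop :: "'d set \<Rightarrow> ('d \<Rightarrow> 'd) \<Rightarrow> ('d \<Rightarrow> 'd) \<Rightarrow> 'd list \<Rightarrow> bool" where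
  "tame_loop D rv sg l \<longleftrightarrow> is_loop D rv sg l \<and>
     distinct l \<and> (\<forall>e\<in>set l. rv e \<notin> set l) \<and>
     (\<forall>v. visits sg l v \<le> 2) \<and>
     (\<forall>v. visits sg l v = 2 \<longrightarrow> (\<exists>e1 e2 e3 e4. crossing_labels rv sg l v e1 e2 e3 e4))"

definition Vl :: "('d \<Rightarrow> 'd) \<Rightarrow> 'd list \<Rightarrow> 'd set set" where
  "Vl sg l = {v. visits sg l v = 2}"

definition El :: "('d \<Rightarrow> 'd) \<Rightarrow> 'd list \<Rightarrow> 'd set" where
  "El rv l = {e. e \<in> set l \<or> rv e \<in> set l}"

definition mm_vec :: "'d set \<Rightarrow> ('d \<Rightarrow> 'd) \<Rightarrow> ('d \<Rightarrow> 'd) \<Rightarrow> 'd list \<Rightarrow> 'd set \<Rightarrow> 'd set \<Rightarrow> real" where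
  "mm_vec D rv sg l v = (let (e1, e2, e3, e4) =
       (SOME t. case t of (e1, e2, e3, e4) \<Rightarrow> crossing_labels rv sg l v e1 e2 e3 e4)
     in (\<lambda>f. dform1 D rv sg (ind1 rv e1) f + dform1 D rv sg (ind1 rv e3) f))"

definition lin_span :: "('a \<Rightarrow> real) set \<Rightarrow> ('a \<Rightarrow> real) set" where
  "lin_span G = {a. \<exists>S c. finite S \<and> S \<subseteq> G \<and> a = (\<lambda>x. \<Sum>g\<in>S. c g * g x)}"

definition mm_space :: "'d set \<Rightarrow> ('d \<Rightarrow> 'd) \<Rightarrow> ('d \<Rightarrow> 'd) \<Rightarrow> 'd list \<Rightarrow> ('d set \<Rightarrow> real) set" where
  "mm_space D rv sg l = lin_span (mm_vec D rv sg l ` Vl sg l \<union>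
       (\<lambda>e. dform1 D rv sg (ind1 rv e)) ` (D - El rv l))"

text \<open>[l]_R = 0 : omega_l lies in d^*(Omega^2)\<close>
definition hom_trivial :: "'d set \<Rightarrow> ('d \<Rightarrow> 'd) \<Rightarrow> ('d \<Rightarrow> 'd) \<Rightarrow> 'd list \<Rightarrow> bool" where
  "hom_trivial D rv sg l \<longleftrightarrow> omega_path rv l \<in> codiff2 D rv sg ` Omega2 D rv sg"

definition winding :: "'d set \<Rightarrow> ('d \<Rightarrow> 'd) \<Rightarrow> ('d \<Rightarrow> 'd) \<Rightarrow> 'd list \<Rightarrow> 'd set \<Rightarrow> real" where
  "winding D rv sg l = (THE n. n \<in> Omega2 D rv sg \<and> codiff2 D rv sg n = omega_path rv l \<and>
      inner2 D rv sg n (mu_star D rv sg) = 0)"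

end

theory Submission
  imports Defs
begin


definition orb :: "('a \<Rightarrow> 'a) \<Rightarrow> 'a \<Rightarrow> 'a set" where
  "orb p x = {(p ^^ k) x | k. True}"

lemma funpow_in: "p ` A \<subseteq> A \<Longrightarrow> x \<in> A \<Longrightarrow> (p ^^ k) x \<in> A"
  by (induction k) auto

lemma funpow_cancel:
  assumes "p ` A \<subseteq> A" "inj_on p A" "x \<in> A" "y \<in> A" "(p ^^ k) x = (p ^^ k) y"
  shows "x = y"
  using assms(3-5)
proof (induction k arbitrary: x y)
  case 0 then show ?case by simp
next
  case (Suc k)
  have "(p ^^ k) (p x) = (p ^^ k) (p y)" using Suc.prems(3) by (metis comp_apply funpow_Suc_right)
  moreover have "p x \<in> A" "p y \<in> A" using Suc.prems assms(1) by auto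
  ultimately have "p x = p y" using Suc.IH by blast
  then show ?case using assms(2) Suc.prems(1,2) by (simp add: inj_on_eq_iff)
qed

lemma period_aux:
  assumes "p ` A \<subseteq> A" "inj_on p A" "x \<in> A" "i < j" "(p ^^ i) x = (p ^^ j) x"
  shows "\<exists>n>0. (p ^^ n) x = x"
proof -
  have "j = i + (j - i)" using assms(4) by simp
  then have "(p ^^ j) x = (p ^^ (i + (j - i))) x" by (rule arg_cong)
  also have "\<dots> = (p ^^ i) ((p ^^ (j - i)) x)" by (simp only: funpow_add o_apply)
  finally have "(p ^^ j) x = (p ^^ i) ((p ^^ (j - i)) x)" .
  then have "(p ^^ i) ((p ^^ (j - i)) x) = (p ^^ i) x" using assms(5) by simp
  then have "(p ^^ (j - i)) x = x"
    using funpow_cancel[OF assms(1,2) funpow_in[OF assms(1,3)] assms(3)] by blast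
  then show ?thesis using assms(4) by (intro exI[of _ "j - i"]) simp
qed

lemma period:
  assumes "finite A" "p ` A \<subseteq> A" "inj_on p A" "x \<in> A"
  shows "\<exists>n>0. (p ^^ n) x = x"
proof -
  let ?f = "\<lambda>k. (p ^^ k) x"
  have "?f ` {..card A} \<subseteq> A" using funpow_in[OF assms(2,4)] by blast
  then have "card (?f ` {..card A}) \<le> card A" using assms(1) card_mono by blast
  then have "\<not> inj_on ?f {..card A}"
  proof (intro notI)
    assume "card (?f ` {..card A}) \<le> card A" "inj_on ?f {..card A}"
    then have "card {..card A} \<le> card A" using card_image by metis
    then show False by simp
  qed
  then obtain i j where ij: "i \<noteq> j" "?f i = ?f j"
    unfolding inj_on_def by blast
  show ?thesis
  proof (cases "i < j")
    case True then show ?thesis using period_aux[OF assms(2-4)] ij by blast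
  next
    case False then have "j < i" using ij(1) by simp
    then show ?thesis using period_aux[OF assms(2-4)] ij by metis
  qed
qed

lemma orb_eq:
  assumes "finite A" "p ` A \<subseteq> A" "inj_on p A" "x \<in> A" "y \<in> orb p x"
  shows "orb p y = orb p x"
proof -
  obtain k where y: "y = (p ^^ k) x" using assms(5) unfolding orb_def by auto
  obtain n where n: "n > 0" "(p ^^ n) x = x" using period[OF assms(1-4)] by auto
  have nk: "(p ^^ (n * k)) x = x"
    using funpow_mod_eq[where f=p and n=n and x=x and m="n * k"] n by simp
  have "orb p y \<subseteq> orb p x"
  proof
    fix z assume "z \<in> orb p y"
    then obtain m where "z = (p ^^ m) y" unfolding orb_def by blast
    then have "z = (p ^^ (m + k)) x" unfolding y by (simp add: funpow_add)
    then show "z \<in> orb p x" unfolding orb_def by blast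
  qed
  moreover have "x \<in> orb p y"
  proof -
    have "n * k \<ge> k" using n by simp
    then have "(p ^^ (n * k - k)) y = x" using nk unfolding y
      by (metis funpow_add le_add_diff_inverse2 o_apply)
    then show ?thesis unfolding orb_def by auto
  qed
  moreover have "orb p x \<subseteq> orb p y" if xy: "x \<in> orb p y"
  proof
    obtain k' where k': "x = (p ^^ k') y" using xy unfolding orb_def by blast
    fix z assume "z \<in> orb p x"
    then obtain m where "z = (p ^^ m) x" unfolding orb_def by blast
    then have "z = (p ^^ (m + k')) y" unfolding k' by (simp add: funpow_add)
    then show "z \<in> orb p y" unfolding orb_def by blast
  qed
  ultimately show ?thesis by blast
qed

lemma orb_self: "x \<in> orb p x"
proof -
  have "x = (p ^^ 0) x" by simp
  then show ?thesis unfolding orb_def by blast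
qed

lemma orb_step: "p x \<in> orb p x"
proof -
  have "p x = (p ^^ 1) x" by simp
  then show ?thesis unfolding orb_def by blast
qed

lemma orb_sub: "p ` A \<subseteq> A \<Longrightarrow> x \<in> A \<Longrightarrow> orb p x \<subseteq> A"
proof
  fix y assume "p ` A \<subseteq> A" "x \<in> A" "y \<in> orb p x"
  then obtain k where "y = (p ^^ k) x" unfolding orb_def by blast
  then show "y \<in> A" using funpow_in[OF \<open>p ` A \<subseteq> A\<close> \<open>x \<in> A\<close>] by simp
qed


lemma sum_image_gen_eq:
  assumes "finite S"
  shows "sum g S = (\<Sum>y\<in>h ` S. sum g {x \<in> S. h x = y})"
  using sum.image_gen[OF assms] by blast

lemma sum_sq_zero:
  assumes "finite A" "(\<Sum>e\<in>A. (f e :: real) * f e) = 0" "e \<in> A"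
  shows "f e = 0"
proof -
  have "\<forall>e\<in>A. f e * f e = 0"
    using sum_nonneg_eq_0_iff[OF assms(1), of "\<lambda>e. f e * f e"] assms(2) by simp
  then show ?thesis using assms(3) by simp
qed


definition ipr :: "'a set \<Rightarrow> ('a \<Rightarrow> real) \<Rightarrow> ('a \<Rightarrow> real) \<Rightarrow> real" where
  "ipr X a b = (\<Sum>f\<in>X. a f * b f)"

lemma ipr_comm: "ipr X a b = ipr X b a"
  unfolding ipr_def by (simp add: mult.commute)

lemma ipr_diff_l: "ipr X (\<lambda>f. a f - b f) c = ipr X a c - ipr X b c"
  unfolding ipr_def by (simp add: left_diff_distrib sum_subtractf)

lemma ipr_diff_r: "ipr X c (\<lambda>f. a f - b f) = ipr X c a - ipr X c b"
  unfolding ipr_def by (simp add: right_diff_distrib sum_subtractf)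

lemma ipr_add_r: "ipr X c (\<lambda>f. a f + b f) = ipr X c a + ipr X c b"
  unfolding ipr_def by (simp add: distrib_left sum.distrib)

lemma ipr_scale_r: "ipr X c (\<lambda>f. s * a f) = s * ipr X c a"
  unfolding ipr_def by (simp add: sum_distrib_left mult.left_commute)

lemma ipr_sum_r: "ipr X a (\<lambda>f. \<Sum>h\<in>G. c h * h f) = (\<Sum>h\<in>G. c h * ipr X a h)"
proof -
  have "ipr X a (\<lambda>f. \<Sum>h\<in>G. c h * h f) = (\<Sum>f\<in>X. \<Sum>h\<in>G. c h * (a f * h f))"
    unfolding ipr_def by (simp add: sum_distrib_left mult.left_commute)
  also have "\<dots> = (\<Sum>h\<in>G. \<Sum>f\<in>X. c h * (a f * h f))" by (rule sum.swap)
  also have "\<dots> = (\<Sum>h\<in>G. c h * ipr X a h)"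
    unfolding ipr_def by (simp add: sum_distrib_left)
  finally show ?thesis .
qed

lemma ipr_cong_r: "(\<And>f. f \<in> X \<Longrightarrow> b f = b' f) \<Longrightarrow> ipr X a b = ipr X a b'"
  unfolding ipr_def by simp

lemma ipr_self_zero:
  assumes "finite X" "ipr X a a = 0" "f \<in> X" shows "a f = 0"
  using sum_sq_zero[of X a f] assms unfolding ipr_def by simp

lemma proj:
  assumes "finite X" "finite G"
  shows "\<exists>c. \<forall>g\<in>G. ipr X (\<lambda>f. a f - (\<Sum>h\<in>G. c h * h f)) g = 0"
  using assms(2)
proof (induction G arbitrary: a rule: finite_induct)
  case empty show ?case by simp
next
  case (insert g0 G)
  obtain c0 where c0: "\<forall>g\<in>G. ipr X (\<lambda>f. g0 f - (\<Sum>h\<in>G. c0 h * h f)) g = 0"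
    using insert.IH by blast
  obtain ca where ca: "\<forall>g\<in>G. ipr X (\<lambda>f. a f - (\<Sum>h\<in>G. ca h * h f)) g = 0"
    using insert.IH by blast
  define hv where "hv = (\<lambda>f. g0 f - (\<Sum>h\<in>G. c0 h * h f))"
  define ra where "ra = (\<lambda>f. a f - (\<Sum>h\<in>G. ca h * h f))"
  define p0 where "p0 = (\<lambda>f. (\<Sum>h\<in>G. c0 h * h f))"
  have hvG: "\<forall>g\<in>G. ipr X hv g = 0" using c0 unfolding hv_def by simp
  have raG: "\<forall>g\<in>G. ipr X ra g = 0" using ca unfolding ra_def by simp
  have ra_p0: "ipr X ra p0 = 0" unfolding p0_def ipr_sum_r using raG by simp
  have hv_p0: "ipr X hv p0 = 0" unfolding p0_def ipr_sum_r using hvG by simp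
  have g0_eq: "g0 = (\<lambda>f. hv f + p0 f)" unfolding hv_def p0_def by simp
  show ?case
  proof (cases "ipr X hv hv = 0")
    case True
    then have hv0: "\<And>f. f \<in> X \<Longrightarrow> hv f = 0" using ipr_self_zero[OF assms(1)] by blast
    define c' where "c' = ca(g0 := 0)"
    have "(\<Sum>h\<in>insert g0 G. c' h * h f) = (\<Sum>h\<in>G. ca h * h f)" for f
    proof -
      have "(\<Sum>h\<in>insert g0 G. c' h * h f) = c' g0 * g0 f + (\<Sum>h\<in>G. c' h * h f)"
        using insert.hyps by (simp add: sum.insert)
      also have "(\<Sum>h\<in>G. c' h * h f) = (\<Sum>h\<in>G. ca h * h f)"
        using insert.hyps(2) unfolding c'_def by (intro sum.cong) auto
      finally show ?thesis unfolding c'_def by simp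
    qed
    then have res: "(\<lambda>f. a f - (\<Sum>h\<in>insert g0 G. c' h * h f)) = ra"
      unfolding ra_def by simp
    have "ipr X ra g0 = 0"
    proof -
      have "ipr X ra g0 = ipr X ra hv + ipr X ra p0"
        by (subst g0_eq) (rule ipr_add_r)
      also have "ipr X ra hv = 0"
        unfolding ipr_def using hv0 by simp
      finally show ?thesis using ra_p0 by simp
    qed
    then show ?thesis using raG res by (intro exI[of _ c']) simp
  next
    case False
    define t where "t = ipr X ra hv / ipr X hv hv"
    define c' where "c' = (\<lambda>h. ca h - t * c0 h)(g0 := t)"
    have "(\<Sum>h\<in>insert g0 G. c' h * h f) = t * g0 f + (\<Sum>h\<in>G. ca h * h f) - t * (\<Sum>h\<in>G. c0 h * h f)" for f
    proof -
      have "(\<Sum>h\<in>insert g0 G. c' h * h f) = c' g0 * g0 f + (\<Sum>h\<in>G. c' h * h f)"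
        using insert.hyps by (simp add: sum.insert)
      also have "(\<Sum>h\<in>G. c' h * h f) = (\<Sum>h\<in>G. ca h * h f - t * (c0 h * h f))"
        using insert.hyps(2) unfolding c'_def by (intro sum.cong) (auto simp: algebra_simps)
      also have "\<dots> = (\<Sum>h\<in>G. ca h * h f) - t * (\<Sum>h\<in>G. c0 h * h f)"
        by (simp add: sum_subtractf sum_distrib_left)
      finally show ?thesis unfolding c'_def by simp
    qed
    note sf = this
    have res: "(\<lambda>f. a f - (\<Sum>h\<in>insert g0 G. c' h * h f)) = (\<lambda>f. ra f - t * hv f)"
    proof (rule ext)
      fix f show "a f - (\<Sum>h\<in>insert g0 G. c' h * h f) = ra f - t * hv f"
        unfolding ra_def hv_def sf by (simp add: algebra_simps)
    qed
    have rg: "ipr X (\<lambda>f. ra f - t * hv f) g = ipr X ra g - t * ipr X hv g" for g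
      unfolding ipr_def by (simp add: left_diff_distrib sum_subtractf sum_distrib_left mult.assoc)
    have "ipr X (\<lambda>f. ra f - t * hv f) hv = ipr X ra hv - t * ipr X hv hv" by (rule rg)
    also have "\<dots> = 0" unfolding t_def using False by simp
    finally have "ipr X (\<lambda>f. ra f - t * hv f) hv = 0" .
    moreover have "ipr X (\<lambda>f. ra f - t * hv f) p0 = 0"
      unfolding rg using ra_p0 hv_p0 by simp
    ultimately have "ipr X (\<lambda>f. ra f - t * hv f) g0 = 0"
      by (subst g0_eq) (simp add: ipr_add_r)
    moreover have "\<forall>g\<in>G. ipr X (\<lambda>f. ra f - t * hv f) g = 0"
      unfolding rg using raG hvG by simp
    ultimately show ?thesis using res by (intro exI[of _ c']) simp
  qed
qed


lemma ls_fin: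
  assumes "finite G" "a \<in> lin_span G"
  shows "\<exists>c. a = (\<lambda>x. \<Sum>g\<in>G. c g * g x)"
proof -
  obtain S c where S: "finite S" "S \<subseteq> G" "a = (\<lambda>x. \<Sum>g\<in>S. c g * g x)"
    using assms(2) unfolding lin_span_def by blast
  define c' where "c' = (\<lambda>g. if g \<in> S then c g else 0)"
  have "(\<Sum>g\<in>G. c' g * g x) = (\<Sum>g\<in>S. c g * g x)" for x
  proof -
    have "(\<Sum>g\<in>G. c' g * g x) = (\<Sum>g\<in>G. if g \<in> S then c g * g x else 0)"
      unfolding c'_def by (intro sum.cong) auto
    also have "\<dots> = (\<Sum>g\<in>G \<inter> S. c g * g x)" by (rule sum.inter_restrict[OF assms(1), symmetric])
    also have "G \<inter> S = S" using S(2) by blast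
    finally show ?thesis .
  qed
  then show ?thesis using S(3) by (intro exI[of _ c']) simp
qed

lemma ls_mem: "finite G \<Longrightarrow> (\<lambda>x. \<Sum>g\<in>G. c g * g x) \<in> lin_span G"
  unfolding lin_span_def by blast

locale cmap =
  fixes D :: "'d set" and rv sg :: "'d \<Rightarrow> 'd"
  assumes cm: "comb_map D rv sg"
begin

lemma finD: "finite D" using cm unfolding comb_map_def by blast
lemma Dne: "D \<noteq> {}" using cm unfolding comb_map_def by blast
lemma rvD: "e \<in> D \<Longrightarrow> rv e \<in> D" using cm unfolding comb_map_def by blast
lemma rvrv[simp]: "e \<in> D \<Longrightarrow> rv (rv e) = e" using cm unfolding comb_map_def by blast
lemma rvne: "e \<in> D \<Longrightarrow> rv e \<noteq> e" using cm unfolding comb_map_def by blast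
lemma sgbij: "bij_betw sg D D" using cm unfolding comb_map_def by blast
lemma sgD: "e \<in> D \<Longrightarrow> sg e \<in> D" using sgbij by (meson bij_betwE)
lemma sgimg: "sg ` D \<subseteq> D" using sgD by blast
lemma sginj: "inj_on sg D" using sgbij by (simp add: bij_betw_def)
lemma conn: "x \<in> D \<Longrightarrow> y \<in> D \<Longrightarrow>
   (x, y) \<in> ({(e, sg e) | e. e \<in> D} \<union> {(e, rv e) | e. e \<in> D})\<^sup>*"
  using cm unfolding comb_map_def by blast

lemma rvinj: "inj_on rv D"
proof (rule inj_onI)
  fix x y assume "x \<in> D" "y \<in> D" "rv x = rv y"
  then have "rv (rv x) = rv (rv y)" by simp
  then show "x = y" using \<open>x \<in> D\<close> \<open>y \<in> D\<close> by simp
qed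

lemma phiimg: "(rv \<circ> sg) ` D \<subseteq> D"
proof
  fix y assume "y \<in> (rv \<circ> sg) ` D"
  then obtain x where "x \<in> D" "y = rv (sg x)" by auto
  then show "y \<in> D" using sgD rvD by simp
qed
lemma phiinj: "inj_on (rv \<circ> sg) D"
proof (rule comp_inj_on[OF sginj])
  show "inj_on rv (sg ` D)" using rvinj sgimg inj_on_subset by blast
qed

abbreviation fc :: "'d \<Rightarrow> 'd set" where "fc \<equiv> orb (rv \<circ> sg)"

lemma faces_eq: "faces D rv sg = fc ` D"
  unfolding faces_def by (intro image_cong refl) (simp only: orb_def)

lemma fc_sub: "x \<in> D \<Longrightarrow> fc x \<subseteq> D"
  using orb_sub[OF phiimg] by blast

lemma fc_eq: "x \<in> D \<Longrightarrow> y \<in> fc x \<Longrightarrow> fc y = fc x"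
  using orb_eq[OF finD phiimg phiinj] by blast

lemma fc_mem: "e \<in> D \<Longrightarrow> f \<in> faces D rv sg \<Longrightarrow> e \<in> f \<Longrightarrow> f = fc e"
proof -
  assume e: "e \<in> D" and f: "f \<in> faces D rv sg" and ef: "e \<in> f"
  obtain x where x: "x \<in> D" "f = fc x" using f unfolding faces_eq by blast
  then show "f = fc e" using fc_eq[OF x(1)] ef by simp
qed

lemma fc_in: "e \<in> D \<Longrightarrow> fc e \<in> faces D rv sg"
  unfolding faces_eq by blast

lemma fc_phi: "x \<in> D \<Longrightarrow> fc (rv (sg x)) = fc x"
  using fc_eq orb_step[of "rv \<circ> sg" x] by simp

lemma fin_faces: "finite (faces D rv sg)"
  unfolding faces_eq using finD by simp

lemma faces_ne: "faces D rv sg \<noteq> {}"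
  unfolding faces_eq using Dne by simp

lemma sum_faces: "(\<Sum>f\<in>faces D rv sg. \<Sum>e\<in>f. g e) = (\<Sum>e\<in>D. g e)"
proof -
  have "(\<Sum>e\<in>D. g e) = (\<Sum>f\<in>fc ` D. sum g {e \<in> D. fc e = f})"
    using sum_image_gen_eq[OF finD] by blast
  also have "\<dots> = (\<Sum>f\<in>fc ` D. sum g f)"
  proof (rule sum.cong[OF refl])
    fix f assume "f \<in> fc ` D"
    then obtain x where x: "x \<in> D" "f = fc x" by blast
    have "{e \<in> D. fc e = f} = f"
    proof
      show "{e \<in> D. fc e = f} \<subseteq> f" using orb_self[of _ "rv \<circ> sg"] by blast
      show "f \<subseteq> {e \<in> D. fc e = f}" using x fc_sub fc_eq by blast
    qed
    then show "sum g {e \<in> D. fc e = f} = sum g f" by simp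
  qed
  finally show ?thesis unfolding faces_eq by simp
qed

lemma inner_dform: "inner2 D rv sg (dform1 D rv sg w) a = (\<Sum>e\<in>D. w e * a (fc e))"
proof -
  have "inner2 D rv sg (dform1 D rv sg w) a = (\<Sum>f\<in>faces D rv sg. \<Sum>e\<in>f. w e * a f)"
    unfolding inner2_def dform1_def by (simp add: sum_distrib_right)
  also have "\<dots> = (\<Sum>f\<in>faces D rv sg. \<Sum>e\<in>f. w e * a (fc e))"
  proof (rule sum.cong[OF refl], rule sum.cong[OF refl])
    fix f e assume fe: "f \<in> faces D rv sg" "e \<in> f"
    then have "e \<in> D" unfolding faces_eq using fc_sub by blast
    then show "w e * a f = w e * a (fc e)" using fc_mem fe by metis
  qed
  also have "\<dots> = (\<Sum>e\<in>D. w e * a (fc e))" by (rule sum_faces)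
  finally show ?thesis .
qed

definition Jf :: "('d set \<Rightarrow> real) \<Rightarrow> 'd \<Rightarrow> real" where
  "Jf a x = a (fc x) - a (fc (rv x))"

lemma sum_rv: "(\<Sum>e\<in>D. h (rv e)) = (\<Sum>e\<in>D. h e)"
  by (rule sum.reindex_bij_witness[where i=rv and j=rv]) (auto simp: rvD)

lemma codiff_eq: "codiff2 D rv sg a = (\<lambda>x. if x \<in> D then Jf a x else 0)"
proof -
  let ?c = "\<lambda>x. if x \<in> D then Jf a x else 0"
  have cO: "?c \<in> Omega1 D rv" unfolding Omega1_def Jf_def by (auto simp: rvD)
  have adj: "inner2 D rv sg (dform1 D rv sg w) a = inner1 D w ?c" if w: "w \<in> Omega1 D rv" for w
  proof -
    have "(\<Sum>e\<in>D. w e * a (fc (rv e))) = (\<Sum>e\<in>D. w (rv e) * a (fc (rv (rv e))))"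
      using sum_rv[of "\<lambda>e. w e * a (fc (rv e))"] by simp
    also have "\<dots> = (\<Sum>e\<in>D. - (w e * a (fc e)))"
      using w unfolding Omega1_def by (intro sum.cong) auto
    finally have s: "(\<Sum>e\<in>D. w e * a (fc (rv e))) = - (\<Sum>e\<in>D. w e * a (fc e))"
      by (simp add: sum_negf)
    have "inner1 D w ?c = (\<Sum>e\<in>D. w e * a (fc e) - w e * a (fc (rv e))) / 2"
      unfolding inner1_def Jf_def by (intro arg_cong[where f="\<lambda>t. t / 2"] sum.cong) (auto simp: algebra_simps)
    also have "\<dots> = (\<Sum>e\<in>D. w e * a (fc e))"
      using s by (simp add: sum_subtractf)
    finally show ?thesis using inner_dform by simp
  qed
  show ?thesis unfolding codiff2_def
  proof (rule the_equality)
    show "?c \<in> Omega1 D rv \<and> (\<forall>w\<in>Omega1 D rv. inner2 D rv sg (dform1 D rv sg w) a = inner1 D w ?c)"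
      using cO adj by blast
  next
    fix w' assume H: "w' \<in> Omega1 D rv \<and> (\<forall>w\<in>Omega1 D rv. inner2 D rv sg (dform1 D rv sg w) a = inner1 D w w')"
    let ?d = "\<lambda>x. w' x - ?c x"
    have dO: "?d \<in> Omega1 D rv" using H cO unfolding Omega1_def by auto
    have "inner1 D ?d w' = inner1 D ?d ?c" using H adj[OF dO] dO by auto
    then have "(\<Sum>e\<in>D. ?d e * w' e) = (\<Sum>e\<in>D. ?d e * ?c e)" unfolding inner1_def by simp
    moreover have "(\<Sum>e\<in>D. ?d e * ?d e) = (\<Sum>e\<in>D. ?d e * w' e - ?d e * ?c e)"
      by (rule sum.cong) (simp_all only: right_diff_distrib)
    ultimately have dd: "(\<Sum>e\<in>D. ?d e * ?d e) = 0"
      by (simp only: sum_subtractf)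
    have "?d e = 0" if "e \<in> D" for e
      by (rule sum_sq_zero[OF finD dd that])
    moreover have "\<And>e. e \<notin> D \<Longrightarrow> w' e = 0" using H unfolding Omega1_def by blast
    ultimately show "w' = ?c"
    proof (intro ext)
      fix x
      assume A: "\<And>e. e \<in> D \<Longrightarrow> ?d e = 0" "\<And>e. e \<notin> D \<Longrightarrow> w' e = 0"
      show "w' x = ?c x"
      proof (cases "x \<in> D")
        case True then show ?thesis using A(1)[OF True] by simp
      next
        case False then show ?thesis using A(2)[OF False] by simp
      qed
    qed
  qed
qed


lemma inner2_ipr: "inner2 D rv sg a b = ipr (faces D rv sg) a b"
  unfolding inner2_def ipr_def by simp

lemma Jf_rv: "x \<in> D \<Longrightarrow> Jf a (rv x) = - Jf a x"
  unfolding Jf_def by simp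

lemma inner_dw: assumes x: "x \<in> D"
  shows "inner2 D rv sg (dform1 D rv sg (ind1 rv x)) a = Jf a x"
proof -
  have ne: "rv x \<noteq> x" using rvne[OF x] .
  have "inner2 D rv sg (dform1 D rv sg (ind1 rv x)) a = (\<Sum>e\<in>D. ind1 rv x e * a (fc e))"
    by (rule inner_dform)
  also have "\<dots> = (\<Sum>e\<in>D. (if e = x then a (fc x) else 0) + (if e = rv x then - a (fc (rv x)) else 0))"
    using ne by (intro sum.cong) (auto simp: ind1_def)
  also have "\<dots> = a (fc x) - a (fc (rv x))"
    using x rvD[OF x] by (simp add: sum.distrib sum.delta[OF finD])
  finally show ?thesis unfolding Jf_def .
qed

lemma dform_O2: "dform1 D rv sg w \<in> Omega2 D rv sg"
  unfolding Omega2_def dform1_def by simp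

lemma mu_O2: "mu_star D rv sg \<in> Omega2 D rv sg"
  unfolding Omega2_def mu_star_def by simp

lemma Jf_mu: "x \<in> D \<Longrightarrow> Jf (mu_star D rv sg) x = 0"
  unfolding Jf_def mu_star_def using fc_in rvD by simp

lemma codiff_D: "x \<in> D \<Longrightarrow> codiff2 D rv sg a x = Jf a x"
  using codiff_eq by simp

lemma kernel:
  assumes a: "a \<in> Omega2 D rv sg" and J: "\<And>x. x \<in> D \<Longrightarrow> Jf a x = 0"
  shows "\<exists>k. a = (\<lambda>f. k * mu_star D rv sg f)"
proof -
  obtain x0 where x0: "x0 \<in> D" using Dne by blast
  have st: "a (fc z) = a (fc y)" if "(y, z) \<in> {(e, sg e) | e. e \<in> D} \<union> {(e, rv e) | e. e \<in> D}" for y z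
  proof -
    from that consider "y \<in> D" "z = sg y" | "y \<in> D" "z = rv y" by blast
    then show ?thesis
    proof cases
      case 1
      have "a (fc (sg y)) = a (fc (rv (sg y)))" using J[OF sgD[OF 1(1)]] unfolding Jf_def by simp
      then show ?thesis using fc_phi[OF 1(1)] 1 by simp
    next
      case 2 then show ?thesis using J[OF 2(1)] unfolding Jf_def by simp
    qed
  qed
  have all: "a (fc y) = a (fc x0)" if "y \<in> D" for y
  proof -
    have "(x0, y) \<in> ({(e, sg e) | e. e \<in> D} \<union> {(e, rv e) | e. e \<in> D})\<^sup>*"
      using conn[OF x0 that] .
    then show ?thesis
    proof (induction rule: rtrancl_induct)
      case base then show ?case by simp
    next
      case (step y z)
      have "a (fc z) = a (fc y)" by (rule st[OF step.hyps(2)])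
      then show ?case using step.IH by (rule trans)
    qed
  qed
  show ?thesis
  proof (intro exI[of _ "a (fc x0)"] ext)
    fix f show "a f = a (fc x0) * mu_star D rv sg f"
    proof (cases "f \<in> faces D rv sg")
      case True
      then obtain y where "y \<in> D" "f = fc y" unfolding faces_eq by blast
      then show ?thesis using all unfolding mu_star_def using True by simp
    next
      case False then show ?thesis using a unfolding Omega2_def mu_star_def by simp
    qed
  qed
qed

lemma vert_orb: "vert sg e = orb sg e"
  unfolding vert_def orb_def by simp

lemma vert_sub: "x \<in> D \<Longrightarrow> vert sg x \<subseteq> D"
  unfolding vert_orb using orb_sub[OF sgimg] by blast

lemma vert_eq: "x \<in> D \<Longrightarrow> y \<in> vert sg x \<Longrightarrow> vert sg y = vert sg x"
  unfolding vert_orb using orb_eq[OF finD sgimg sginj] by blast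

lemma vert_self: "x \<in> vert sg x"
  unfolding vert_orb by (rule orb_self)

lemma vert_fin: "x \<in> D \<Longrightarrow> finite (vert sg x)"
  by (rule finite_subset[OF vert_sub finD])

lemma vertex_sum: assumes w: "w \<in> D"
  shows "(\<Sum>x\<in>vert sg w. Jf a x) = 0"
proof -
  let ?V = "vert sg w"
  have fin: "finite ?V" using vert_fin[OF w] .
  have VD: "?V \<subseteq> D" using vert_sub[OF w] .
  have img: "sg ` ?V \<subseteq> ?V"
  proof
    fix y assume "y \<in> sg ` ?V"
    then obtain x where x: "x \<in> ?V" "y = sg x" by blast
    have "vert sg x = ?V" using vert_eq[OF w x(1)] .
    moreover have "sg x \<in> vert sg x" unfolding vert_orb by (rule orb_step)
    ultimately show "y \<in> ?V" using x by simp
  qed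
  have inj: "inj_on sg ?V" using sginj VD inj_on_subset by blast
  have eqV: "sg ` ?V = ?V" using endo_inj_surj[OF fin img inj] .
  have "(\<Sum>x\<in>?V. a (fc (rv x))) = (\<Sum>x\<in>sg ` ?V. a (fc (rv x)))" using eqV by simp
  also have "\<dots> = (\<Sum>y\<in>?V. a (fc (rv (sg y))))" using sum.reindex[OF inj] by simp
  also have "\<dots> = (\<Sum>y\<in>?V. a (fc y))"
  proof (rule sum.cong[OF refl])
    fix y assume "y \<in> ?V" then have "y \<in> D" using VD by blast
    then show "a (fc (rv (sg y))) = a (fc y)" using fc_phi by simp
  qed
  finally have "(\<Sum>x\<in>?V. a (fc (rv x))) = (\<Sum>y\<in>?V. a (fc y))" .
  then show ?thesis unfolding Jf_def by (simp add: sum_subtractf)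
qed

lemma ccw4_ne: assumes "ccw4 sg a b c d" shows "a \<noteq> b"
proof
  assume ab: "a = b"
  obtain i where i: "0 < i" "i < card (vert sg a)" "(sg ^^ i) a = b"
    using assms unfolding ccw4_def by auto
  have per: "(sg ^^ i) a = a" using i(3) ab by simp
  have sub: "vert sg a \<subseteq> (\<lambda>k. (sg ^^ k) a) ` {..<i}"
  proof
    fix y assume "y \<in> vert sg a"
    then obtain k where k: "y = (sg ^^ k) a" unfolding vert_orb orb_def by blast
    have "(sg ^^ (k mod i)) a = (sg ^^ k) a" by (rule funpow_mod_eq[OF per])
    then have "y = (sg ^^ (k mod i)) a" using k by simp
    moreover have "k mod i \<in> {..<i}" using i(1) by simp
    ultimately show "y \<in> (\<lambda>k. (sg ^^ k) a) ` {..<i}" by (rule image_eqI)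
  qed
  have fin: "finite ((\<lambda>k. (sg ^^ k) a) ` {..<i})" by (rule finite_imageI) simp
  have "card (vert sg a) \<le> card ((\<lambda>k. (sg ^^ k) a) ` {..<i})"
    by (rule card_mono[OF fin sub])
  also have "\<dots> \<le> card {..<i}" by (rule card_image_le) simp
  also have "\<dots> = i" by simp
  finally show False using i(2) by simp
qed

end

lemma suc_mod_cases: "i < (n::nat) \<Longrightarrow> Suc i mod n = (if Suc i = n then 0 else Suc i)"
  by (cases "Suc i = n") simp_all

lemma suc_mod_inj: "i < (n::nat) \<Longrightarrow> j < n \<Longrightarrow> Suc i mod n = Suc j mod n \<Longrightarrow> i = j"
  using suc_mod_cases[of i n] suc_mod_cases[of j n]
  by (cases "Suc i = n"; cases "Suc j = n") simp_all

locale cloop = cmap D rv sg for D :: "'d set" and rv sg +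
  fixes l :: "'d list"
  assumes tl: "tame_loop D rv sg l"
begin

lemma isl: "is_loop D rv sg l" using tl unfolding tame_loop_def by blast
lemma lne: "l \<noteq> []" using isl unfolding is_loop_def by blast
lemma lD: "set l \<subseteq> D" using isl unfolding is_loop_def by blast
lemma lDi: "i < length l \<Longrightarrow> l ! i \<in> D" using lD nth_mem by blast
lemma link: "i < length l \<Longrightarrow> vert sg (rv (l ! i)) = vert sg (l ! (Suc i mod length l))"
  using isl unfolding is_loop_def by simp
lemma ldist: "distinct l" using tl unfolding tame_loop_def by blast
lemma lrv: "e \<in> set l \<Longrightarrow> rv e \<notin> set l" using tl unfolding tame_loop_def by blast
lemma vis2: "visits sg l v \<le> 2" using tl unfolding tame_loop_def by blast
lemma cross: "visits sg l v = 2 \<Longrightarrow> \<exists>e1 e2 e3 e4. crossing_labels rv sg l v e1 e2 e3 e4"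
  using tl unfolding tame_loop_def by blast
lemma Lpos: "0 < length l" using lne by simp

lemma omega_set: "omega_path rv l x = (\<Sum>e\<in>set l. ind1 rv e x)"
proof -
  have "bij_betw ((!) l) {..<length l} (set l)" by (rule bij_betw_nth[OF ldist refl refl])
  then show ?thesis unfolding omega_path_def by (rule sum.reindex_bij_betw)
qed

lemma omega_D: assumes x: "x \<in> D"
  shows "omega_path rv l x = (if x \<in> set l then 1 else if rv x \<in> set l then -1 else 0)"
proof -
  have eq: "ind1 rv e x = (if e = x then 1 else 0) + (if e = rv x then -1 else 0)" if e: "e \<in> set l" for e
  proof -
    have eD: "e \<in> D" using e lD by blast
    have "x = rv e \<longleftrightarrow> e = rv x" using x eD by auto
    then show ?thesis unfolding ind1_def using rvne[OF x] by auto
  qed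
  have "omega_path rv l x = (\<Sum>e\<in>set l. (if e = x then 1 else 0) + (if e = rv x then -1 else 0))"
    unfolding omega_set using eq by (rule sum.cong[OF refl])
  also have "\<dots> = (if x \<in> set l then 1 else 0) + (if rv x \<in> set l then -1 else 0)"
    by (simp add: sum.distrib)
  finally show ?thesis using lrv by auto
qed

lemma omega_nD: assumes x: "x \<notin> D" shows "omega_path rv l x = 0"
proof -
  have "ind1 rv e x = 0" if e: "e \<in> set l" for e
  proof -
    have "e \<in> D" "rv e \<in> D" using e lD rvD by auto
    then show ?thesis unfolding ind1_def using x by auto
  qed
  then show ?thesis unfolding omega_set by simp
qed

lemma mm_props: assumes v: "v \<in> Vl sg l"
  shows "\<exists>e1 e2 e3 e4. crossing_labels rv sg l v e1 e2 e3 e4 \<and>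
     mm_vec D rv sg l v = (\<lambda>f. dform1 D rv sg (ind1 rv e1) f + dform1 D rv sg (ind1 rv e3) f)"
proof -
  have "visits sg l v = 2" using v unfolding Vl_def by simp
  then obtain e1 e2 e3 e4 where c: "crossing_labels rv sg l v e1 e2 e3 e4" using cross by blast
  let ?P = "\<lambda>t. case t of (e1, e2, e3, e4) \<Rightarrow> crossing_labels rv sg l v e1 e2 e3 e4"
  have ex: "\<exists>t. ?P t" using c by (intro exI[of _ "(e1, e2, e3, e4)"]) simp
  define t where "t = (SOME t. ?P t)"
  have Pt: "?P t" unfolding t_def by (rule someI_ex[OF ex])
  obtain a1 a2 a3 a4 where t: "t = (a1, a2, a3, a4)" by (cases t) auto
  have "crossing_labels rv sg l v a1 a2 a3 a4" using Pt t by simp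
  moreover have "mm_vec D rv sg l v = (\<lambda>f. dform1 D rv sg (ind1 rv a1) f + dform1 D rv sg (ind1 rv a3) f)"
    unfolding mm_vec_def t_def[symmetric] t by simp
  ultimately show ?thesis by blast
qed

lemma Vl_fin: "finite (Vl sg l)"
proof -
  have "Vl sg l \<subseteq> (\<lambda>i. vert sg (l ! i)) ` {..<length l}"
  proof
    fix v assume "v \<in> Vl sg l"
    then have "card {i. i < length l \<and> vert sg (l ! i) = v} = 2" unfolding Vl_def visits_def by simp
    then have "{i. i < length l \<and> vert sg (l ! i) = v} \<noteq> {}" by (metis card.empty zero_neq_numeral)
    then obtain i where "i < length l" "vert sg (l ! i) = v" by blast
    then show "v \<in> (\<lambda>i. vert sg (l ! i)) ` {..<length l}" by blast
  qed
  then show ?thesis by (rule finite_subset) simp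
qed


lemma inner_mm:
  assumes "e1 \<in> D" "e3 \<in> D"
  shows "inner2 D rv sg (\<lambda>f. dform1 D rv sg (ind1 rv e1) f + dform1 D rv sg (ind1 rv e3) f) a
         = Jf a e1 + Jf a e3"
proof -
  have "inner2 D rv sg (\<lambda>f. dform1 D rv sg (ind1 rv e1) f + dform1 D rv sg (ind1 rv e3) f) a
      = inner2 D rv sg (dform1 D rv sg (ind1 rv e1)) a + inner2 D rv sg (dform1 D rv sg (ind1 rv e3)) a"
    unfolding inner2_def by (simp add: distrib_right sum.distrib)
  then show ?thesis using inner_dw assms by simp
qed

lemma step:
  assumes J0: "\<And>x. x \<in> D \<Longrightarrow> x \<notin> El rv l \<Longrightarrow> Jf r x = 0"
    and MM: "\<And>v. v \<in> Vl sg l \<Longrightarrow> inner2 D rv sg (mm_vec D rv sg l v) r = 0"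
    and k: "k < length l"
  shows "Jf r (l ! k) = Jf r (l ! (Suc k mod length l))"
proof -
  define L where "L = length l"
  define k' where "k' = Suc k mod L"
  have kL: "k < L" using k L_def by simp
  have k'L: "k' < L" unfolding k'_def using Lpos L_def by simp
  define b where "b = l ! k'"
  define a where "a = rv (l ! k)"
  define W where "W = vert sg b"
  have lk: "l ! k \<in> D" using lDi kL L_def by simp
  have bD: "b \<in> D" unfolding b_def using lDi k'L L_def by simp
  have aD: "a \<in> D" unfolding a_def using rvD lk by simp
  have aW0: "vert sg a = W" unfolding a_def W_def b_def k'_def L_def using link k by simp
  have WD: "W \<subseteq> D" unfolding W_def using vert_sub[OF bD] .
  have bW: "b \<in> W" unfolding W_def by (rule vert_self)
  have aW: "a \<in> W" using aW0 vert_self by metis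
  have vW: "vert sg x = W" if "x \<in> W" for x unfolding W_def using vert_eq[OF bD] that W_def by simp
  define I where "I = {i. i < L \<and> vert sg (l ! i) = W}"
  have visI: "visits sg l W = card I" unfolding visits_def I_def L_def by simp
  have finI: "finite I" unfolding I_def by simp
  have k'I: "k' \<in> I" unfolding I_def W_def b_def using k'L by simp
  have C1: "\<exists>i\<in>I. x = l ! i" if xW0: "x \<in> W" and xl: "x \<in> set l" for x
  proof -
    obtain i where "i < L" "x = l ! i" using xl unfolding L_def in_set_conv_nth by metis
    then show ?thesis unfolding I_def using vW[OF xW0] by auto
  qed
  have C2: "\<exists>i<L. rv x = l ! i \<and> Suc i mod L \<in> I" if xW0: "x \<in> W" and xl: "rv x \<in> set l" for x
  proof -
    obtain i where i: "i < L" "rv x = l ! i" using xl unfolding L_def in_set_conv_nth by metis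
    have xD: "x \<in> D" using xW0 WD by blast
    have "vert sg (l ! (Suc i mod L)) = vert sg (rv (l ! i))" using link i(1) L_def by simp
    also have "\<dots> = vert sg x" using i(2) xD by (metis rvrv)
    also have "\<dots> = W" using vW xW0 by simp
    finally have "Suc i mod L \<in> I" unfolding I_def using i(1) Lpos L_def by simp
    then show ?thesis using i by blast
  qed
  have Z: "Jf r x = 0" if "x \<in> W" "x \<notin> set l" "rv x \<notin> set l" for x
    using J0[of x] that WD unfolding El_def by blast
  have vs: "(\<Sum>x\<in>W. Jf r x) = 0" unfolding W_def by (rule vertex_sum[OF bD])
  have finW: "finite W" unfolding W_def by (rule vert_fin[OF bD])
  have "card I \<ge> 1" using k'I finI by (metis One_nat_def Suc_leI card_gt_0_iff empty_iff)
  moreover have "card I \<le> 2" using vis2[of W] visI by simp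
  ultimately consider "card I = 1" | "card I = 2" by linarith
  then show ?thesis
  proof cases
    case 1
    then obtain z where "I = {z}" using card_1_singletonE by blast
    then have Ik: "I = {k'}" using k'I by simp
    have ab: "a \<noteq> b"
    proof
      assume "a = b"
      then have "rv (l ! k) \<in> set l" unfolding a_def b_def using k'L L_def by simp
      then show False using lrv lk kL L_def nth_mem by blast
    qed
    have others: "Jf r x = 0" if "x \<in> W - {a, b}" for x
    proof -
      have xW: "x \<in> W" and xa: "x \<noteq> a" and xb: "x \<noteq> b" using that by auto
      have "x \<notin> set l"
      proof
        assume "x \<in> set l"
        then obtain i where "i \<in> I" "x = l ! i" using C1 xW by blast
        then show False using Ik xb b_def by simp
      qed
      moreover have "rv x \<notin> set l"
      proof
        assume "rv x \<in> set l"
        then obtain i where i: "i < L" "rv x = l ! i" "Suc i mod L \<in> I" using C2 xW by blast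
        then have "i = k" using suc_mod_inj[OF i(1) kL] Ik k'_def by simp
        then have "x = a" unfolding a_def using i(2) xW WD by (metis rvrv subsetD)
        then show False using xa by simp
      qed
      ultimately show ?thesis using Z xW by blast
    qed
    have "(\<Sum>x\<in>{a, b}. Jf r x) = (\<Sum>x\<in>W. Jf r x)"
      by (rule sum.mono_neutral_left[OF finW]) (use aW bW others in auto)
    then have "Jf r a + Jf r b = 0" using vs ab by simp
    moreover have "Jf r a = - Jf r (l ! k)" unfolding a_def by (rule Jf_rv[OF lk])
    ultimately show ?thesis unfolding b_def k'_def L_def by simp
  next
    case 2
    then have WV: "W \<in> Vl sg l" unfolding Vl_def using visI by simp
    obtain e1 e2 e3 e4 where cl: "crossing_labels rv sg l W e1 e2 e3 e4"
      and mmv: "mm_vec D rv sg l W = (\<lambda>f. dform1 D rv sg (ind1 rv e1) f + dform1 D rv sg (ind1 rv e3) f)"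
      using mm_props[OF WV] by blast
    have ve1: "vert sg e1 = W" and cc: "ccw4 sg e1 e2 e3 e4" using cl unfolding crossing_labels_def by auto
    obtain i j where ij: "i < L" "j < L" "l ! i = rv e1" "l ! (Suc i mod L) = e3"
        "l ! j = rv e2" "l ! (Suc j mod L) = e4"
      using cl unfolding crossing_labels_def L_def by auto
    have e1W: "e1 \<in> W" using ve1 vert_self by metis
    have e1D: "e1 \<in> D" using e1W WD by blast
    have e2W: "e2 \<in> W"
    proof -
      obtain i' where "(sg ^^ i') e1 = e2" using cc unfolding ccw4_def by blast
      then have "e2 \<in> vert sg e1" unfolding vert_def by blast
      then show ?thesis using ve1 by simp
    qed
    have e2D: "e2 \<in> D" using e2W WD by blast
    have e12: "e1 \<noteq> e2" by (rule ccw4_ne[OF cc])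
    have iD: "l ! i \<in> D" "l ! j \<in> D" using lDi ij(1,2) L_def by auto
    have ij_ne: "i \<noteq> j"
    proof
      assume "i = j"
      then have "rv e1 = rv e2" using ij by simp
      then have "rv (rv e1) = rv (rv e2)" by simp
      then show False using e12 e1D e2D by simp
    qed
    have I'J': "Suc i mod L \<noteq> Suc j mod L" using suc_mod_inj[OF ij(1,2)] ij_ne by blast
    have Li: "Suc i mod L < L" "Suc j mod L < L" using Lpos L_def by auto
    have e3l: "e3 \<in> set l" using ij(4) Li(1) L_def nth_mem by metis
    have e4l: "e4 \<in> set l" using ij(6) Li(2) L_def nth_mem by metis
    have e34: "e3 \<noteq> e4"
    proof
      assume "e3 = e4"
      then have "l ! (Suc i mod L) = l ! (Suc j mod L)" using ij by simp
      then show False using I'J' Li ldist L_def nth_eq_iff_index_eq by metis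
    qed
    have e1l: "e1 \<notin> set l"
    proof
      assume "e1 \<in> set l"
      moreover have "rv e1 \<in> set l" using ij(1,3) L_def nth_mem by metis
      ultimately show False using lrv by blast
    qed
    have e2l: "e2 \<notin> set l"
    proof
      assume "e2 \<in> set l"
      moreover have "rv e2 \<in> set l" using ij(2,5) L_def nth_mem by metis
      ultimately show False using lrv by blast
    qed
    have Ii: "Suc i mod L \<in> I"
    proof -
      have "vert sg (l ! (Suc i mod L)) = vert sg (rv (l ! i))" using link ij(1) L_def by simp
      also have "\<dots> = W" using ij(3) e1D ve1 by simp
      finally show ?thesis unfolding I_def using Li by simp
    qed
    have Ij: "Suc j mod L \<in> I"
    proof -
      have "vert sg (l ! (Suc j mod L)) = vert sg (rv (l ! j))" using link ij(2) L_def by simp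
      also have "\<dots> = vert sg e2" using ij(5) e2D by simp
      also have "\<dots> = W" using vW e2W by simp
      finally show ?thesis unfolding I_def using Li by simp
    qed
    have Ieq: "I = {Suc i mod L, Suc j mod L}"
    proof -
      have "{Suc i mod L, Suc j mod L} \<subseteq> I" using Ii Ij by blast
      moreover have "card {Suc i mod L, Suc j mod L} = card I" using I'J' 2 by simp
      ultimately show ?thesis using card_subset_eq[OF finI] by metis
    qed
    have others: "Jf r x = 0" if "x \<in> W - {e1, e2, e3, e4}" for x
    proof -
      have xW: "x \<in> W" and xn: "x \<noteq> e1" "x \<noteq> e2" "x \<noteq> e3" "x \<noteq> e4" using that by auto
      have xD: "x \<in> D" using xW WD by blast
      have "x \<notin> set l"
      proof
        assume "x \<in> set l"
        then obtain m where "m \<in> I" "x = l ! m" using C1 xW by blast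
        then show False using Ieq ij(4,6) xn by auto
      qed
      moreover have "rv x \<notin> set l"
      proof
        assume "rv x \<in> set l"
        then obtain m where m: "m < L" "rv x = l ! m" "Suc m mod L \<in> I" using C2 xW by blast
        then have "m = i \<or> m = j" using Ieq suc_mod_inj[OF m(1) ij(1)] suc_mod_inj[OF m(1) ij(2)] by auto
        then have "rv x = rv e1 \<or> rv x = rv e2" using m(2) ij(3,5) by auto
        then have "rv (rv x) = rv (rv e1) \<or> rv (rv x) = rv (rv e2)" by auto
        then show False using xD e1D e2D xn by simp
      qed
      ultimately show ?thesis using Z xW by blast
    qed
    have e3W: "e3 \<in> W" and e4W: "e4 \<in> W"
    proof -
      have "vert sg e3 = W" using Ii ij(4) unfolding I_def by simp
      then show "e3 \<in> W" using vert_self by metis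
      have "vert sg e4 = W" using Ij ij(6) unfolding I_def by simp
      then show "e4 \<in> W" using vert_self by metis
    qed
    have "(\<Sum>x\<in>{e1, e2, e3, e4}. Jf r x) = (\<Sum>x\<in>W. Jf r x)"
      by (rule sum.mono_neutral_left[OF finW]) (use e1W e2W e3W e4W others in auto)
    moreover have "(\<Sum>x\<in>{e1, e2, e3, e4}. Jf r x) = Jf r e1 + Jf r e2 + Jf r e3 + Jf r e4"
    proof -
      have "e1 \<noteq> e3" "e1 \<noteq> e4" "e2 \<noteq> e3" "e2 \<noteq> e4" using e1l e2l e3l e4l by auto
      then show ?thesis using e12 e34 by (simp add: add.assoc)
    qed
    ultimately have s4: "Jf r e1 + Jf r e2 + Jf r e3 + Jf r e4 = 0" using vs by simp
    have "inner2 D rv sg (mm_vec D rv sg l W) r = Jf r e1 + Jf r e3"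
      unfolding mmv using inner_mm e1D e3W WD by blast
    then have s13: "Jf r e1 + Jf r e3 = 0" using MM[OF WV] by simp
    have "k' \<in> {Suc i mod L, Suc j mod L}" using k'I Ieq by simp
    then have "k = i \<or> k = j" using suc_mod_inj[OF kL ij(1)] suc_mod_inj[OF kL ij(2)] k'_def by auto
    then show ?thesis
    proof
      assume "k = i"
      then have "Jf r (l ! k) = - Jf r e1" using ij(3) Jf_rv[OF e1D] by simp
      also have "\<dots> = Jf r e3" using s13 by simp
      also have "\<dots> = Jf r (l ! (Suc k mod length l))" using ij(4) \<open>k = i\<close> L_def by simp
      finally show ?thesis .
    next
      assume "k = j"
      then have "Jf r (l ! k) = - Jf r e2" using ij(5) Jf_rv[OF e2D] by simp
      also have "\<dots> = Jf r e4" using s13 s4 by simp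
      also have "\<dots> = Jf r (l ! (Suc k mod length l))" using ij(6) \<open>k = j\<close> L_def by simp
      finally show ?thesis .
    qed
  qed
qed


lemma Jf_diff: "Jf (\<lambda>f. a f - b f) x = Jf a x - Jf b x"
  unfolding Jf_def by simp

lemma Jf_scale: "Jf (\<lambda>f. s * a f) x = s * Jf a x"
  unfolding Jf_def by (simp add: right_diff_distrib)

lemma Jf_lin: "Jf (\<lambda>f. s * a f + t * b f) x = s * Jf a x + t * Jf b x"
  unfolding Jf_def by (simp add: algebra_simps)

lemma inner_mu_mu: "inner2 D rv sg (mu_star D rv sg) (mu_star D rv sg) = real (card (faces D rv sg))"
  unfolding inner2_def mu_star_def by simp

lemma card_faces_pos: "real (card (faces D rv sg)) > 0"
  using fin_faces faces_ne by (simp add: card_gt_0_iff)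

lemma key:
  assumes J0: "\<And>x. x \<in> D \<Longrightarrow> x \<notin> El rv l \<Longrightarrow> Jf r x = 0"
    and MM: "\<And>v. v \<in> Vl sg l \<Longrightarrow> inner2 D rv sg (mm_vec D rv sg l v) r = 0"
  shows "\<exists>c. \<forall>x\<in>D. Jf r x = c * omega_path rv l x"
proof -
  define c where "c = Jf r (l ! 0)"
  have all: "k < length l \<Longrightarrow> Jf r (l ! k) = c" for k
  proof (induction k)
    case 0 then show ?case unfolding c_def by simp
  next
    case (Suc k)
    then have kL: "k < length l" by simp
    have "Jf r (l ! k) = Jf r (l ! (Suc k mod length l))" by (rule step[OF J0 MM kL])
    also have "Suc k mod length l = Suc k" using Suc.prems by simp
    finally show ?case using Suc.IH kL by simp
  qed
  have "Jf r x = c * omega_path rv l x" if x: "x \<in> D" for x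
  proof (cases "x \<in> set l")
    case True
    then obtain k where "k < length l" "x = l ! k" unfolding in_set_conv_nth by metis
    then show ?thesis using all omega_D[OF x] True by simp
  next
    case False
    show ?thesis
    proof (cases "rv x \<in> set l")
      case True
      then obtain k where "k < length l" "rv x = l ! k" unfolding in_set_conv_nth by metis
      then have "Jf r (rv x) = c" using all by simp
      then have "Jf r x = - c" using Jf_rv[OF x] by simp
      then show ?thesis using omega_D[OF x] True False by simp
    next
      case False2: False
      then have "Jf r x = 0" using J0[OF x] False unfolding El_def by blast
      then show ?thesis using omega_D[OF x] False False2 by simp
    qed
  qed
  then show ?thesis by blast
qed

lemma winding_props:
  assumes ht: "hom_trivial D rv sg l"
  shows "winding D rv sg l \<in> Omega2 D rv sg \<and>
         (\<forall>x\<in>D. Jf (winding D rv sg l) x = omega_path rv l x) \<and>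
         inner2 D rv sg (winding D rv sg l) (mu_star D rv sg) = 0"
proof -
  obtain a where a: "a \<in> Omega2 D rv sg" "omega_path rv l = codiff2 D rv sg a"
    using ht unfolding hom_trivial_def by blast
  let ?mu = "mu_star D rv sg"
  let ?N = "real (card (faces D rv sg))"
  define m where "m = inner2 D rv sg a ?mu / ?N"
  define n0 where "n0 = (\<lambda>f. a f - m * ?mu f)"
  have n0O: "n0 \<in> Omega2 D rv sg" using a(1) unfolding n0_def Omega2_def mu_star_def by simp
  have Jn0: "Jf n0 x = Jf a x" if "x \<in> D" for x
    unfolding n0_def Jf_diff Jf_scale using Jf_mu[OF that] by simp
  have cn0: "codiff2 D rv sg n0 = omega_path rv l"
    unfolding a(2) codiff_eq using Jn0 by (intro ext) simp
  have in0: "inner2 D rv sg n0 ?mu = 0"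
  proof -
    have "inner2 D rv sg n0 ?mu = inner2 D rv sg a ?mu - m * inner2 D rv sg ?mu ?mu"
      unfolding n0_def inner2_def by (simp add: left_diff_distrib sum_subtractf sum_distrib_left mult.assoc)
    also have "\<dots> = 0" unfolding m_def inner_mu_mu using card_faces_pos by simp
    finally show ?thesis .
  qed
  have uniq: "n = n0" if n: "n \<in> Omega2 D rv sg \<and> codiff2 D rv sg n = omega_path rv l \<and> inner2 D rv sg n ?mu = 0" for n
  proof -
    define d where "d = (\<lambda>f. n f - n0 f)"
    have dO: "d \<in> Omega2 D rv sg" using n n0O unfolding d_def Omega2_def by simp
    have "Jf d x = 0" if x: "x \<in> D" for x
    proof -
      have "Jf n x = omega_path rv l x" using n codiff_D[OF x, of n] by simp
      moreover have "Jf n0 x = omega_path rv l x" using cn0 codiff_D[OF x, of n0] by simp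
      ultimately show ?thesis unfolding d_def Jf_diff by simp
    qed
    then obtain k where k: "d = (\<lambda>f. k * ?mu f)" using kernel[OF dO] by blast
    have "inner2 D rv sg d ?mu = inner2 D rv sg n ?mu - inner2 D rv sg n0 ?mu"
      unfolding d_def inner2_def by (simp add: left_diff_distrib sum_subtractf)
    then have "inner2 D rv sg d ?mu = 0" using n in0 by simp
    moreover have "inner2 D rv sg d ?mu = k * ?N"
      unfolding k inner_mu_mu[symmetric] inner2_def by (simp add: sum_distrib_left mult.assoc)
    ultimately have "k = 0" using card_faces_pos by simp
    then have "d = (\<lambda>f. 0)" using k by simp
    then show ?thesis unfolding d_def by (intro ext) (metis eq_iff_diff_eq_0)
  qed
  have "winding D rv sg l = n0"
    unfolding winding_def
  proof (rule the_equality)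
    show "n0 \<in> Omega2 D rv sg \<and> codiff2 D rv sg n0 = omega_path rv l \<and> inner2 D rv sg n0 ?mu = 0"
      using n0O cn0 in0 by blast
  next
    fix n assume "n \<in> Omega2 D rv sg \<and> codiff2 D rv sg n = omega_path rv l \<and> inner2 D rv sg n ?mu = 0"
    then show "n = n0" by (rule uniq)
  qed
  moreover have "\<forall>x\<in>D. Jf n0 x = omega_path rv l x" using cn0 codiff_D by metis
  ultimately show ?thesis using n0O in0 by simp
qed


abbreviation GG where
  "GG \<equiv> mm_vec D rv sg l ` Vl sg l \<union> (\<lambda>e. dform1 D rv sg (ind1 rv e)) ` (D - El rv l)"

lemma GG_fin: "finite GG"
  using Vl_fin finD by simp

lemma GG_O2: "g \<in> GG \<Longrightarrow> g \<in> Omega2 D rv sg"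
proof -
  assume g: "g \<in> GG"
  then consider v where "v \<in> Vl sg l" "g = mm_vec D rv sg l v"
    | e where "g = dform1 D rv sg (ind1 rv e)" by blast
  then show ?thesis
  proof cases
    case 1
    then obtain e1 e2 e3 e4 where "g = (\<lambda>f. dform1 D rv sg (ind1 rv e1) f + dform1 D rv sg (ind1 rv e3) f)"
      using mm_props by blast
    then show ?thesis unfolding Omega2_def dform1_def by simp
  next
    case 2 then show ?thesis using dform_O2 by simp
  qed
qed

lemma GG_inner:
  assumes g: "g \<in> GG"
    and b: "\<And>x. x \<in> D \<Longrightarrow> Jf b x = s * omega_path rv l x"
  shows "inner2 D rv sg g b = 0"
proof -
  from g consider v where "v \<in> Vl sg l" "g = mm_vec D rv sg l v"
    | e where "e \<in> D" "e \<notin> El rv l" "g = dform1 D rv sg (ind1 rv e)" by blast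
  then show ?thesis
  proof cases
    case 1
    then obtain e1 e2 e3 e4 where cl: "crossing_labels rv sg l v e1 e2 e3 e4"
      and geq: "g = (\<lambda>f. dform1 D rv sg (ind1 rv e1) f + dform1 D rv sg (ind1 rv e3) f)"
      using mm_props by blast
    obtain i j where ij: "i < length l" "l ! i = rv e1" "l ! (Suc i mod length l) = e3"
      using cl unfolding crossing_labels_def by auto
    have r1: "rv e1 \<in> set l" using ij(1,2) nth_mem by metis
    have e3l: "e3 \<in> set l" using ij(3) Lpos nth_mem by (metis mod_less_divisor)
    have e1D: "e1 \<in> D"
    proof -
      have "rv (rv e1) \<in> D" using r1 lD rvD by blast
      have "vert sg e1 = v" using cl unfolding crossing_labels_def by simp
      moreover have "v \<in> Vl sg l" using 1 by simp
      then have "visits sg l v = 2" unfolding Vl_def by simp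
      then have "{i. i < length l \<and> vert sg (l ! i) = v} \<noteq> {}" unfolding visits_def
        by (metis card.empty zero_neq_numeral)
      then obtain m where m: "m < length l" "vert sg (l ! m) = v" by blast
      have "e1 \<in> vert sg e1" by (rule vert_self)
      then have "e1 \<in> vert sg (l ! m)" using m calculation by simp
      then show ?thesis using vert_sub lDi[OF m(1)] by blast
    qed
    have e1l: "e1 \<notin> set l" using lrv r1 e1D by fastforce
    have e3D: "e3 \<in> D" using e3l lD by blast
    have "inner2 D rv sg g b = Jf b e1 + Jf b e3" unfolding geq by (rule inner_mm[OF e1D e3D])
    also have "\<dots> = s * omega_path rv l e1 + s * omega_path rv l e3" using b e1D e3D by simp
    also have "\<dots> = 0" using omega_D[OF e1D] omega_D[OF e3D] e1l r1 e3l by simp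
    finally show ?thesis .
  next
    case 2
    have "inner2 D rv sg g b = Jf b e" unfolding 2(3) by (rule inner_dw[OF 2(1)])
    also have "\<dots> = 0" using b[OF 2(1)] omega_D[OF 2(1)] 2(2) unfolding El_def by simp
    finally show ?thesis .
  qed
qed

lemma comb_props:
  assumes "a = (\<lambda>x. \<Sum>g\<in>GG. c g * g x)"
  shows "a \<in> Omega2 D rv sg" "inner2 D rv sg a (mu_star D rv sg) = 0"
    "hom_trivial D rv sg l \<Longrightarrow> inner2 D rv sg a (winding D rv sg l) = 0"
proof -
  have z: "g f = 0" if "g \<in> GG" "f \<notin> faces D rv sg" for g f
    using GG_O2[OF that(1)] that(2) unfolding Omega2_def by blast
  show "a \<in> Omega2 D rv sg" unfolding Omega2_def assms
  proof (intro CollectI allI impI)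
    fix f assume "f \<notin> faces D rv sg"
    then show "(\<Sum>g\<in>GG. c g * g f) = 0" using z by (intro sum.neutral) simp
  qed
  have lin: "inner2 D rv sg a b = (\<Sum>g\<in>GG. c g * inner2 D rv sg g b)" for b
    unfolding inner2_ipr assms by (subst ipr_comm) (simp add: ipr_sum_r ipr_comm)
  show "inner2 D rv sg a (mu_star D rv sg) = 0"
    unfolding lin using GG_inner[where s=0] Jf_mu by simp
  assume ht: "hom_trivial D rv sg l"
  show "inner2 D rv sg a (winding D rv sg l) = 0"
    unfolding lin using GG_inner[where s=1] winding_props[OF ht] by simp
qed


lemma inner2_diff_l: "inner2 D rv sg (\<lambda>f. a f - b f) c = inner2 D rv sg a c - inner2 D rv sg b c"
  unfolding inner2_ipr by (rule ipr_diff_l)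

lemma inner2_lin_r: "inner2 D rv sg c (\<lambda>f. s * a f + t * b f) = s * inner2 D rv sg c a + t * inner2 D rv sg c b"
  unfolding inner2_def by (simp add: distrib_left sum.distrib sum_distrib_left mult.left_commute)

lemma main:
  "mm_space D rv sg l =
    (if \<not> hom_trivial D rv sg l
     then {a \<in> Omega2 D rv sg. inner2 D rv sg a (mu_star D rv sg) = 0}
     else {a \<in> Omega2 D rv sg. inner2 D rv sg a (mu_star D rv sg) = 0 \<and>
                               inner2 D rv sg a (winding D rv sg l) = 0})"
  (is "_ = ?T")
proof
  let ?mu = "mu_star D rv sg"
  let ?n = "winding D rv sg l"
  show "mm_space D rv sg l \<subseteq> ?T"
  proof
    fix a assume "a \<in> mm_space D rv sg l"
    then obtain c where c: "a = (\<lambda>x. \<Sum>g\<in>GG. c g * g x)"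
      using ls_fin[OF GG_fin] unfolding mm_space_def by blast
    show "a \<in> ?T" using comb_props[OF c] by simp
  qed
  show "?T \<subseteq> mm_space D rv sg l"
  proof
    fix \<alpha> assume aT: "\<alpha> \<in> ?T"
    have aO: "\<alpha> \<in> Omega2 D rv sg" and amu: "inner2 D rv sg \<alpha> ?mu = 0"
      using aT by (auto split: if_splits)
    have an: "inner2 D rv sg \<alpha> ?n = 0" if "hom_trivial D rv sg l"
      using aT that by simp
    obtain c where pc: "\<forall>g\<in>GG. ipr (faces D rv sg) (\<lambda>f. \<alpha> f - (\<Sum>h\<in>GG. c h * h f)) g = 0"
      using proj[OF fin_faces GG_fin] by blast
    define p where "p = (\<lambda>x. \<Sum>g\<in>GG. c g * g x)"
    define r where "r = (\<lambda>f. \<alpha> f - p f)"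
    note pp = comb_props[OF p_def]
    have rO: "r \<in> Omega2 D rv sg" using aO pp(1) unfolding r_def Omega2_def by simp
    have orth: "inner2 D rv sg g r = 0" if "g \<in> GG" for g
      using pc that unfolding inner2_ipr r_def p_def by (simp add: ipr_comm)
    have J0: "Jf r x = 0" if "x \<in> D" "x \<notin> El rv l" for x
    proof -
      have "dform1 D rv sg (ind1 rv x) \<in> GG" using that by blast
      then have "inner2 D rv sg (dform1 D rv sg (ind1 rv x)) r = 0" by (rule orth)
      then show ?thesis using inner_dw[OF that(1)] by simp
    qed
    have MM: "inner2 D rv sg (mm_vec D rv sg l v) r = 0" if "v \<in> Vl sg l" for v
      using orth that by blast
    obtain c0 where c0: "\<forall>x\<in>D. Jf r x = c0 * omega_path rv l x" using key[OF J0 MM] by blast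
    have rmu: "inner2 D rv sg r ?mu = 0" unfolding r_def inner2_diff_l using amu pp(2) by simp
    have rr: "inner2 D rv sg r r = 0"
    proof (cases "hom_trivial D rv sg l")
      case False
      have "c0 = 0"
      proof (rule ccontr)
        assume c0ne: "c0 \<noteq> 0"
        define r' where "r' = (\<lambda>f. (1 / c0) * r f)"
        have r'O: "r' \<in> Omega2 D rv sg" using rO unfolding r'_def Omega2_def by simp
        have "codiff2 D rv sg r' = omega_path rv l"
        proof (rule ext)
          fix x show "codiff2 D rv sg r' x = omega_path rv l x"
          proof (cases "x \<in> D")
            case True
            then show ?thesis unfolding codiff_D[OF True] r'_def Jf_scale using c0 c0ne by simp
          next
            case False
            then show ?thesis unfolding codiff_eq using omega_nD by simp
          qed
        qed
        then have "hom_trivial D rv sg l" unfolding hom_trivial_def using r'O by (metis image_eqI)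
        then show False using False by simp
      qed
      then have "\<And>x. x \<in> D \<Longrightarrow> Jf r x = 0" using c0 by simp
      then obtain k where k: "r = (\<lambda>f. k * ?mu f)" using kernel[OF rO] by blast
      have "inner2 D rv sg r r = inner2 D rv sg r (\<lambda>f. k * ?mu f + 0 * ?mu f)"
        using k by simp
      also have "\<dots> = 0" unfolding inner2_lin_r using rmu by simp
      finally show ?thesis .
    next
      case True
      note wp = winding_props[OF True]
      define r2 where "r2 = (\<lambda>f. r f - c0 * ?n f)"
      have r2O: "r2 \<in> Omega2 D rv sg" using rO wp unfolding r2_def Omega2_def by simp
      have "Jf r2 x = 0" if "x \<in> D" for x
        unfolding r2_def Jf_diff Jf_scale using c0 wp that by simp
      then obtain k where k: "r2 = (\<lambda>f. k * ?mu f)" using kernel[OF r2O] by blast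
      have req: "r = (\<lambda>f. c0 * ?n f + k * ?mu f)"
      proof (rule ext)
        fix f have "r2 f = k * ?mu f" using k by simp
        then show "r f = c0 * ?n f + k * ?mu f" unfolding r2_def by simp
      qed
      have rn: "inner2 D rv sg r ?n = 0" unfolding r_def inner2_diff_l using an[OF True] pp(3)[OF True] by simp
      have "inner2 D rv sg r r = inner2 D rv sg r (\<lambda>f. c0 * ?n f + k * ?mu f)"
        by (subst req) (rule refl)
      also have "\<dots> = 0" unfolding inner2_lin_r using rn rmu by simp
      finally show ?thesis .
    qed
    have "\<alpha> = p"
    proof (rule ext)
      fix f show "\<alpha> f = p f"
      proof (cases "f \<in> faces D rv sg")
        case True
        have "r f = 0" using ipr_self_zero[OF fin_faces _ True] rr unfolding inner2_ipr by blast
        then show ?thesis unfolding r_def by simp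
      next
        case False
        then show ?thesis using aO pp(1) unfolding Omega2_def by simp
      qed
    qed
    then show "\<alpha> \<in> mm_space D rv sg l" unfolding mm_space_def p_def using ls_mem[OF GG_fin] by simp
  qed
qed

end



theorem lemma2p14:
  fixes D :: "'d set" and rv sg :: "'d \<Rightarrow> 'd" and l :: "'d list"
  assumes "comb_map D rv sg"
    and "tame_loop D rv sg l"
  shows "mm_space D rv sg l =
    (if \<not> hom_trivial D rv sg l
     then {a \<in> Omega2 D rv sg. inner2 D rv sg a (mu_star D rv sg) = 0}
     else {a \<in> Omega2 D rv sg. inner2 D rv sg a (mu_star D rv sg) = 0 \<and>
                               inner2 D rv sg a (winding D rv sg l) = 0})"
proof -
  have "cloop D rv sg l"
    unfolding cloop_def cloop_axioms_def cmap_def using assms by blast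
  then show ?thesis by (rule cloop.main)
qed

end
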